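(* Let $a_1,\dots,a_n$ be positive integers, let $\mathcal{G}=\mathcal{G}[a_1,\dots,a_n]$, let $\mathcal{G}_{\leftrightarrow}=\mathcal{G}[a_n,\dots,a_2,a_1,a_1,a_2,\dots,a_n]$ (the palindromification of $\mathcal{G}$), and let $\mathcal{G}'=\mathcal{G}[a_2,\dots,a_n]$. Then \[ m(\mathcal{G}_{\leftrightarrow})=m(\mathcal{G})^2+m(\mathcal{G}')^2. \]
   Context: A tile is a unit square in the plane with sides parallel to the coordinate axes, viewed as a graph with 4 vertices and 4 edges. A snake graph with $d\ge 1$ tiles is a planar graph which is the union of tiles $G_1,\dots,G_d$ such that for each $i$, $G_{i+1}$ is the translate of $G_i$ by $(0,1)$ or by $(1,0)$; thus $G_i$ and $G_{i+1}$ share exactly one edge $e_i$. A sign function on a snake graph is a map $f$ from its edges to $\{+,-\}$ such that in every tile the north and west edges have the same sign, the south and east edges have the same sign, and the north and south edges have opposite signs. For a sequence $(a_1,\dots,a_n)$ of positive integers with $d=a_1+\cdots+a_n-1\ge 1$, $\mathcal{G}[a_1,\dots,a_n]$ is the unique snake graph with tiles $G_1,\dots,G_d$ for which there exist a sign function $f$ and an edge $e_d\in\{\text{north edge of }G_d,\text{east edge of }G_d\}$ such that, with $e_0$ the south edge of $G_1$ and $e_i$ ($1\le i\le d-1$) the edge shared by $G_i,G_{i+1}$, the sequence $(f(e_0),\dots,f(e_d))$ consists of $a_1$ copies of a sign $s$, then $a_2$ copies of $-s$, then $a_3$ copies of $s$, and so on alternately. By convention $\mathcal{G}[1]$ is a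 single edge, and the snake graph of the empty sequence (which occurs as $\mathcal{G}'$ when $n=1$) is a single edge. For a graph $\mathcal{H}$, $m(\mathcal{H})$ denotes its number of perfect matchings (a single edge has exactly one). *)

theory Defs
  imports Main
begin

type_synonym pt = "int \<times> int"
type_synonym graph = "pt set \<times> pt set set"

text \<open>A snake graph with d tiles is encoded by the list ds of d-1 steps:
  True = translate by (1,0) (east), False = translate by (0,1) (north).
  The first tile G_1 (index 0 here) has lower-left corner (0,0).\<close>
definition tile_pos :: "bool list \<Rightarrow> nat \<Rightarrow> pt" where
  "tile_pos ds i = (int (length (filter id (take i ds))), int (length (filter Not (take i ds))))"

definition south_edge :: "bool list \<Rightarrow> nat \<Rightarrow> pt set" where
  "south_edge ds i = (case tile_pos ds i of (x,y) \<Rightarrow> {(x,y),(x+1,y)})"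
definition north_edge :: "bool list \<Rightarrow> nat \<Rightarrow> pt set" where
  "north_edge ds i = (case tile_pos ds i of (x,y) \<Rightarrow> {(x,y+1),(x+1,y+1)})"
definition west_edge :: "bool list \<Rightarrow> nat \<Rightarrow> pt set" where
  "west_edge ds i = (case tile_pos ds i of (x,y) \<Rightarrow> {(x,y),(x,y+1)})"
definition east_edge :: "bool list \<Rightarrow> nat \<Rightarrow> pt set" where
  "east_edge ds i = (case tile_pos ds i of (x,y) \<Rightarrow> {(x+1,y),(x+1,y+1)})"

definition tile_vertices :: "bool list \<Rightarrow> nat \<Rightarrow> pt set" where
  "tile_vertices ds i = (case tile_pos ds i of (x,y) \<Rightarrow> {(x,y),(x+1,y),(x,y+1),(x+1,y+1)})"

definition tile_edges :: "bool list \<Rightarrow> nat \<Rightarrow> pt set set" where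
  "tile_edges ds i = {south_edge ds i, north_edge ds i, west_edge ds i, east_edge ds i}"

definition snake_graph :: "bool list \<Rightarrow> graph" where
  "snake_graph ds = ((\<Union>i\<le>length ds. tile_vertices ds i), (\<Union>i\<le>length ds. tile_edges ds i))"

text \<open>The edge shared by tiles i and i+1 (0-indexed).\<close>
definition shared_edge :: "bool list \<Rightarrow> nat \<Rightarrow> pt set" where
  "shared_edge ds i = (if ds ! i then east_edge ds i else north_edge ds i)"

definition sign_function :: "bool list \<Rightarrow> (pt set \<Rightarrow> bool) \<Rightarrow> bool" where
  "sign_function ds f \<longleftrightarrow> (\<forall>i\<le>length ds.
     f (north_edge ds i) = f (west_edge ds i) \<and>
     f (south_edge ds i) = f (east_edge ds i) \<and>
     f (north_edge ds i) \<noteq> f (south_edge ds i))"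

definition edge_seq :: "bool list \<Rightarrow> pt set \<Rightarrow> pt set list" where
  "edge_seq ds ed = [south_edge ds 0] @ map (shared_edge ds) [0..<length ds] @ [ed]"

definition alt_signs :: "bool \<Rightarrow> nat list \<Rightarrow> bool list" where
  "alt_signs s as = concat (map (\<lambda>k. replicate (as ! k) (if even k then s else \<not> s)) [0..<length as])"

definition single_edge :: graph where
  "single_edge = ({(0,0),(1,0)}, {{(0,0),(1,0)}})"

text \<open>is_G as H: H is the snake graph G[a_1,...,a_n] (placed with first tile at the origin);
  for a_1+...+a_n - 1 < 1 (i.e. the sequence [1] or the empty sequence) it is a single edge.\<close>
definition is_G :: "nat list \<Rightarrow> graph \<Rightarrow> bool" where
  "is_G as H \<longleftrightarrow>
    (if sum_list as \<ge> 2 then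
       (\<exists>ds. length ds + 2 = sum_list as \<and> H = snake_graph ds \<and>
          (\<exists>f s ed. sign_function ds f \<and>
              ed \<in> {north_edge ds (length ds), east_edge ds (length ds)} \<and>
              map f (edge_seq ds ed) = alt_signs s as))
     else H = single_edge)"

definition perfect_matchings :: "graph \<Rightarrow> pt set set set" where
  "perfect_matchings H = {M. M \<subseteq> snd H \<and> (\<forall>v\<in>fst H. \<exists>!e. e \<in> M \<and> v \<in> e)}"

definition num_pm :: "graph \<Rightarrow> nat" where
  "num_pm H = card (perfect_matchings H)"

end

theory Submission
  imports Defs
begin


fun kfold :: "nat list \<Rightarrow> nat \<times> nat \<Rightarrow> nat \<times> nat" where
  "kfold [] st = st"
| "kfold (a#as) st = kfold as (a * fst st + snd st, fst st)"

fun srun :: "bool \<Rightarrow> bool list \<Rightarrow> nat \<times> nat \<Rightarrow> nat \<times> nat" where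
  "srun p [] st = st"
| "srun p (c#cs) st = srun c cs (fst st + snd st, if p \<noteq> c then fst st else snd st)"

fun pm_run :: "bool \<Rightarrow> bool list \<Rightarrow> nat \<times> nat \<Rightarrow> nat \<times> nat" where
  "pm_run p [] st = st"
| "pm_run p (b#bs) st = pm_run b bs (fst st + snd st, if p = b then fst st else snd st)"

lemma pm_run_snoc: "pm_run p (xs@[y]) st = (let r = pm_run p xs st in
   (fst r + snd r, if last (p#xs) = y then fst r else snd r))"
  by (induction xs arbitrary: p st) auto

lemma run_eq: "length ys = length xs \<Longrightarrow>
  (\<forall>j<length xs. ((p#xs)!j = (p#xs)!Suc j) = ((q#ys)!j \<noteq> (q#ys)!Suc j)) \<Longrightarrow>
  pm_run p xs st = srun q ys st"
proof (induction xs arbitrary: p q ys st)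
  case Nil then show ?case by simp
next
  case (Cons x xs)
  then obtain y ys' where ys: "ys = y#ys'" by (cases ys) auto
  have h0: "(p = x) = (q \<noteq> y)" using Cons.prems(2) ys by (metis length_Cons nth_Cons_0 nth_Cons_Suc zero_less_Suc)
  have "\<forall>j<length xs. ((x#xs)!j = (x#xs)!Suc j) = ((y#ys')!j \<noteq> (y#ys')!Suc j)"
  proof (intro allI impI)
    fix j assume "j < length xs"
    then have "Suc j < length (x#xs)" by simp
    with Cons.prems(2) have "((p#x#xs)!Suc j = (p#x#xs)!Suc (Suc j)) = ((q#y#ys')!Suc j \<noteq> (q#y#ys')!Suc (Suc j))"
      using ys by blast
    then show "((x#xs)!j = (x#xs)!Suc j) = ((y#ys')!j \<noteq> (y#ys')!Suc j)" by simp
  qed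
  then show ?case using Cons.IH[of ys' x y] Cons.prems(1) ys h0 by simp
qed

lemma srun_rep: "srun s (replicate k s @ rest) st = srun s rest (fst st + k * snd st, snd st)"
  by (induction k arbitrary: st) (auto simp: algebra_simps)

lemma alt_signs_Nil: "alt_signs s [] = []" by (simp add: alt_signs_def)

lemma odd_if_aux: "(if odd k then s else \<not> s) = (if even k then \<not>s else (s::bool))" by auto

lemma alt_signs_Cons: "alt_signs s (a#as) = replicate a s @ alt_signs (\<not>s) as"
proof -
  have e: "[0..<length (a#as)] = 0 # map Suc [0..<length as]"
    by (simp add: upt_conv_Cons map_Suc_upt del: upt_Suc)
  have r: "alt_signs (\<not>s) as = concat (map (\<lambda>k. replicate (as!k) (if even k then \<not> s else s)) [0..<length as])"
    unfolding alt_signs_def by (intro arg_cong[where f=concat] map_cong refl) auto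
  show ?thesis unfolding r unfolding alt_signs_def e by (simp add: comp_def odd_if_aux)
qed

lemma srun_alt: "\<forall>a\<in>set as. 0 < a \<Longrightarrow> srun (\<not>s) (alt_signs s as) (P,Q) = kfold as (P,Q)"
proof (induction as arbitrary: s P Q)
  case Nil then show ?case by (simp add: alt_signs_Nil)
next
  case (Cons a as)
  then obtain k where a: "a = Suc k" by (cases a) auto
  have "srun (\<not>s) (alt_signs s (a#as)) (P,Q) = srun s (replicate k s @ alt_signs (\<not>s) as) (P+Q, P)"
    by (simp add: alt_signs_Cons a)
  also have "\<dots> = srun s (alt_signs (\<not>s) as) (P+Q+k*P, P)" by (simp add: srun_rep)
  also have "\<dots> = kfold as (P+Q+k*P, P)" using Cons.IH[of "\<not>s"] Cons.prems by simp
  finally show ?case by (simp add: a algebra_simps)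
qed

lemma kfold_append: "kfold (xs@ys) st = kfold ys (kfold xs st)"
  by (induction xs arbitrary: st) auto

lemma kfold_lin: "kfold xs (P,Q) = (P * fst (kfold xs (1,0)) + Q * fst (kfold xs (0,1)),
    P * snd (kfold xs (1,0)) + Q * snd (kfold xs (0,1)))"
proof (induction xs arbitrary: P Q)
  case Nil then show ?case by simp
next
  case (Cons a xs)
  have "kfold (a#xs) (P,Q) = kfold xs (a*P+Q, P)" by simp
  also have "\<dots> = ((a*P+Q) * fst (kfold xs (1,0)) + P * fst (kfold xs (0,1)),
    (a*P+Q) * snd (kfold xs (1,0)) + P * snd (kfold xs (0,1)))" by (rule Cons.IH)
  finally show ?case using Cons.IH[of a 1] by (simp add: algebra_simps)
qed

definition "ka xs = fst (kfold xs (1,0))"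
definition "kb xs = fst (kfold xs (0,1))"
definition "kc xs = snd (kfold xs (1,0))"
definition "kd xs = snd (kfold xs (0,1))"

lemma k_cons: "ka (a#xs) = a * ka xs + kb xs" "kb (a#xs) = ka xs"
  "kc (a#xs) = a * kc xs + kd xs" "kd (a#xs) = kc xs"
  unfolding ka_def kb_def kc_def kd_def using kfold_lin[of xs a 1] by auto

lemma k_snoc: "ka (xs@[a]) = a * ka xs + kc xs" "kb (xs@[a]) = a * kb xs + kd xs"
  "kc (xs@[a]) = ka xs" "kd (xs@[a]) = kb xs"
  unfolding ka_def kb_def kc_def kd_def by (auto simp: kfold_append)

lemma k_rev: "ka (rev xs) = ka xs \<and> kb (rev xs) = kc xs \<and> kc (rev xs) = kb xs \<and> kd (rev xs) = kd xs"
proof (induction xs)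
  case Nil then show ?case by (simp add: ka_def kb_def kc_def kd_def)
next
  case (Cons a xs) then show ?case by (simp add: k_snoc k_cons)
qed

lemma k_pal: "as \<noteq> [] \<Longrightarrow> ka (rev as @ as) = ka as ^ 2 + ka (tl as) ^ 2"
proof -
  assume "as \<noteq> []"
  then obtain a t where as: "as = a#t" by (cases as) auto
  have "ka (rev as @ as) = fst (kfold as (ka (rev as), kc (rev as)))"
    by (simp add: ka_def kc_def kfold_append del: kfold.simps)
  also have "\<dots> = ka (rev as) * ka as + kc (rev as) * kb as"
    unfolding kfold_lin[of as "ka (rev as)" "kc (rev as)"] ka_def[of as] kb_def[of as] by simp
  also have "\<dots> = ka as ^ 2 + ka (tl as) ^ 2" using k_rev[of as] by (simp add: as k_cons power2_eq_square)
  finally show ?thesis .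
qed


definition gdel :: "graph \<Rightarrow> pt set \<Rightarrow> graph" where
  "gdel H S = (fst H - S, {e \<in> snd H. e \<inter> S = {}})"

lemma pm_iff: "M \<in> perfect_matchings H \<longleftrightarrow> M \<subseteq> snd H \<and> (\<forall>v\<in>fst H. \<exists>e\<in>M. v\<in>e) \<and>
   (\<forall>v\<in>fst H. \<forall>e1\<in>M. \<forall>e2\<in>M. v\<in>e1 \<longrightarrow> v\<in>e2 \<longrightarrow> e1 = e2)"
  unfolding perfect_matchings_def by (auto simp: Ex1_def) (metis)+

lemma pm_edge_card:
  assumes eE: "e \<in> snd H" and eV: "e \<subseteq> fst H" and ne: "e \<noteq> {}"
  shows "card {M \<in> perfect_matchings H. e \<in> M} = card (perfect_matchings (gdel H e))"
proof -
  have gd: "fst (gdel H e) = fst H - e" "snd (gdel H e) = {x \<in> snd H. x \<inter> e = {}}" unfolding gdel_def by simp_all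
  have disj: "e' \<inter> e = {}" if "M \<in> perfect_matchings H" "e \<in> M" "e' \<in> M" "e' \<noteq> e" for M e'
  proof (rule ccontr)
    assume "e' \<inter> e \<noteq> {}" then obtain w where w: "w \<in> e'" "w \<in> e" by blast
    then have "w \<in> fst H" using eV by blast
    with that w show False unfolding pm_iff by blast
  qed
  show ?thesis
  proof (rule bij_betw_same_card[of "\<lambda>M. M - {e}"], rule bij_betw_byWitness[where f'="insert e"])
    show "\<forall>a\<in>{M \<in> perfect_matchings H. e \<in> M}. insert e (a - {e}) = a" by blast
    show "\<forall>a'\<in>perfect_matchings (gdel H e). insert e a' - {e} = a'"
    proof
      fix a' assume "a' \<in> perfect_matchings (gdel H e)"
      then have "a' \<subseteq> {x \<in> snd H. x \<inter> e = {}}" unfolding pm_iff gd by simp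
      then have "e \<notin> a'" using ne by blast
      then show "insert e a' - {e} = a'" by blast
    qed
    show "(\<lambda>M. M - {e}) ` {M \<in> perfect_matchings H. e \<in> M} \<subseteq> perfect_matchings (gdel H e)"
    proof (rule image_subsetI)
      fix M assume "M \<in> {M \<in> perfect_matchings H. e \<in> M}"
      then have M: "M \<in> perfect_matchings H" "e \<in> M" by auto
      have sub: "M \<subseteq> snd H" and cov: "\<forall>v\<in>fst H. \<exists>x\<in>M. v\<in>x"
        and uq: "\<forall>v\<in>fst H. \<forall>e1\<in>M. \<forall>e2\<in>M. v\<in>e1 \<longrightarrow> v\<in>e2 \<longrightarrow> e1 = e2"
        using M(1) unfolding pm_iff by auto
      have "M - {e} \<subseteq> {x \<in> snd H. x \<inter> e = {}}" using sub disj M by blast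
      moreover have "\<forall>v\<in>fst H - e. \<exists>x\<in>M - {e}. v\<in>x" using cov by blast
      moreover have "\<forall>v\<in>fst H - e. \<forall>e1\<in>M - {e}. \<forall>e2\<in>M - {e}. v\<in>e1 \<longrightarrow> v\<in>e2 \<longrightarrow> e1 = e2"
        using uq by blast
      ultimately show "M - {e} \<in> perfect_matchings (gdel H e)" unfolding pm_iff gd by blast
    qed
    show "insert e ` perfect_matchings (gdel H e) \<subseteq> {M \<in> perfect_matchings H. e \<in> M}"
    proof (rule image_subsetI)
      fix M assume M: "M \<in> perfect_matchings (gdel H e)"
      have sub: "M \<subseteq> {x \<in> snd H. x \<inter> e = {}}" and cov: "\<forall>v\<in>fst H - e. \<exists>x\<in>M. v\<in>x"
        and uq: "\<forall>v\<in>fst H - e. \<forall>e1\<in>M. \<forall>e2\<in>M. v\<in>e1 \<longrightarrow> v\<in>e2 \<longrightarrow> e1 = e2"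
        using M unfolding pm_iff gd by auto
      have "insert e M \<subseteq> snd H" using sub eE by blast
      moreover have "\<forall>v\<in>fst H. \<exists>x\<in>insert e M. v\<in>x" using cov by blast
      moreover have "\<forall>v\<in>fst H. \<forall>e1\<in>insert e M. \<forall>e2\<in>insert e M. v\<in>e1 \<longrightarrow> v\<in>e2 \<longrightarrow> e1 = e2"
      proof (intro ballI impI)
        fix v e1 e2 assume v: "v \<in> fst H" "e1 \<in> insert e M" "e2 \<in> insert e M" "v \<in> e1" "v \<in> e2"
        show "e1 = e2"
        proof (cases "v \<in> e")
          case True
          then have "e1 = e" "e2 = e" using v sub by blast+
          then show ?thesis by simp
        next
          case False
          then have "e1 \<in> M" "e2 \<in> M" using v by auto
          then show ?thesis using uq v False by blast
        qed
      qed
      ultimately show "insert e M \<in> {M \<in> perfect_matchings H. e \<in> M}" unfolding mem_Collect_eq pm_iff by blast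
    qed
  qed
qed

lemma pm_finite: "finite (snd H) \<Longrightarrow> finite (perfect_matchings H)"
  unfolding perfect_matchings_def by (rule finite_subset[of _ "Pow (snd H)"]) auto

lemma pm_split2:
  assumes fin: "finite (snd H)" and w: "w \<in> fst H"
    and E: "{e \<in> snd H. w \<in> e} = {e1, e2}" and ne: "e1 \<noteq> e2"
    and s1: "e1 \<subseteq> fst H" "e1 \<noteq> {}" and s2: "e2 \<subseteq> fst H" "e2 \<noteq> {}"
  shows "num_pm H = num_pm (gdel H e1) + num_pm (gdel H e2)"
proof -
  have "perfect_matchings H = {M\<in>perfect_matchings H. e1\<in>M} \<union> {M\<in>perfect_matchings H. e2\<in>M}"
  proof (intro equalityI subsetI)
    fix M assume M: "M \<in> perfect_matchings H"
    then obtain x where "x \<in> M" "w \<in> x" "M \<subseteq> snd H" using w unfolding pm_iff by blast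
    then have "x \<in> {e1,e2}" using E by blast
    then show "M \<in> {M\<in>perfect_matchings H. e1\<in>M} \<union> {M\<in>perfect_matchings H. e2\<in>M}"
      using M \<open>x \<in> M\<close> by blast
  qed auto
  moreover have "{M\<in>perfect_matchings H. e1\<in>M} \<inter> {M\<in>perfect_matchings H. e2\<in>M} = {}"
  proof (rule ccontr)
    assume "\<not> ?thesis"
    then obtain M where M: "M \<in> perfect_matchings H" "e1 \<in> M" "e2 \<in> M" by blast
    have "w \<in> e1" "w \<in> e2" using E by blast+
    with M w ne show False unfolding pm_iff by blast
  qed
  ultimately have "num_pm H = card {M\<in>perfect_matchings H. e1\<in>M} + card {M\<in>perfect_matchings H. e2\<in>M}"
    unfolding num_pm_def using pm_finite[OF fin] by (metis (no_types, lifting) card_Un_disjoint finite_Un)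
  moreover have "e1 \<in> snd H" "e2 \<in> snd H" using E by blast+
  ultimately show ?thesis using pm_edge_card s1 s2 unfolding num_pm_def by simp
qed

lemma pm_split1:
  assumes w: "w \<in> fst H"
    and E: "{e \<in> snd H. w \<in> e} = {e1}" and s1: "e1 \<subseteq> fst H" "e1 \<noteq> {}"
  shows "num_pm H = num_pm (gdel H e1)"
proof -
  have eq: "perfect_matchings H = {M\<in>perfect_matchings H. e1\<in>M}"
  proof (intro equalityI subsetI)
    fix M assume M: "M \<in> perfect_matchings H"
    then obtain x where "x \<in> M" "w \<in> x" "M \<subseteq> snd H" using w unfolding pm_iff by blast
    then have "x = e1" using E by blast
    then show "M \<in> {M\<in>perfect_matchings H. e1\<in>M}" using M \<open>x \<in> M\<close> by blast
  qed auto
  have "e1 \<in> snd H" using E by blast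
  then show ?thesis unfolding num_pm_def by (subst eq) (rule pm_edge_card[OF _ s1])
qed

lemma pm_ext:
  fixes V :: "pt set" and E p q u v
  assumes fin: "finite E" and wf: "\<forall>e\<in>E. e \<subseteq> V" and uV: "u \<notin> V" and vV: "v \<notin> V"
    and uv: "u \<noteq> v" and pV: "p \<in> V" and qV: "q \<in> V" and pq: "p \<noteq> q"
  shows "num_pm (V \<union> {u,v}, E \<union> {{u,v},{p,u},{q,v}}) = num_pm (V,E) + num_pm (gdel (V,E) {p,q})"
    and "num_pm (gdel (V \<union> {u,v}, E \<union> {{u,v},{p,u},{q,v}}) {u,v}) = num_pm (V,E)"
    and "num_pm (gdel (V \<union> {u,v}, E \<union> {{u,v},{p,u},{q,v}}) {q,v}) = num_pm (gdel (V,E) {p,q})"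
proof -
  define H' where "H' = (V \<union> {u,v}, E \<union> {{u,v},{p,u},{q,v}})"
  have d: "p \<noteq> u" "p \<noteq> v" "q \<noteq> u" "q \<noteq> v" using pV qV uV vV by auto
  have nu: "u \<notin> e" "v \<notin> e" if "e \<in> E" for e using wf that uV vV by blast+
  have g1: "gdel H' {u,v} = (V,E)"
    unfolding gdel_def H'_def using nu uV vV d uv by auto
  have g2: "gdel (gdel H' {p,u}) {q,v} = gdel (V,E) {p,q}"
    unfolding gdel_def H'_def using nu uV vV d uv pq by auto
  have g3: "gdel (gdel H' {q,v}) {p,u} = gdel (V,E) {p,q}"
    unfolding gdel_def H'_def using nu uV vV d uv pq by auto
  have finH: "finite (snd H')" unfolding H'_def using fin by simp
  have "num_pm H' = num_pm (gdel H' {p,u}) + num_pm (gdel H' {u,v})"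
  proof (rule pm_split2[of H' u])
    show "{e \<in> snd H'. u \<in> e} = {{p,u},{u,v}}" unfolding H'_def using nu d uv by auto
    show "{p,u} \<noteq> {u,v}" using d by (metis doubleton_eq_iff)
  qed (use finH pV in \<open>auto simp: H'_def\<close>)
  moreover have "num_pm (gdel H' {p,u}) = num_pm (gdel (gdel H' {p,u}) {q,v})"
  proof (rule pm_split1[of v])
    show "{e \<in> snd (gdel H' {p,u}). v \<in> e} = {{q,v}}"
      unfolding H'_def gdel_def using nu d uv pq by auto
  qed (use qV d uv pq in \<open>auto simp: H'_def gdel_def\<close>)
  moreover have "num_pm (gdel H' {q,v}) = num_pm (gdel (gdel H' {q,v}) {p,u})"
  proof (rule pm_split1[of u])
    show "{e \<in> snd (gdel H' {q,v}). u \<in> e} = {{p,u}}"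
      unfolding H'_def gdel_def using nu d uv pq by auto
  qed (use pV d uv pq in \<open>auto simp: H'_def gdel_def\<close>)
  ultimately show "num_pm (V \<union> {u,v}, E \<union> {{u,v},{p,u},{q,v}}) = num_pm (V,E) + num_pm (gdel (V,E) {p,q})"
    and "num_pm (gdel (V \<union> {u,v}, E \<union> {{u,v},{p,u},{q,v}}) {u,v}) = num_pm (V,E)"
    and "num_pm (gdel (V \<union> {u,v}, E \<union> {{u,v},{p,u},{q,v}}) {q,v}) = num_pm (gdel (V,E) {p,q})"
    using g1 g2 g3 unfolding H'_def[symmetric] by auto
qed



lemma len_filter_id_Not: "length (filter id t) + length (filter Not t) = length t"
  by (induction t) auto

lemma tile_pos_sum: "i \<le> length ds \<Longrightarrow> fst (tile_pos ds i) + snd (tile_pos ds i) = int i"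
  unfolding tile_pos_def using len_filter_id_Not[of "take i ds"]
  by (simp del: of_nat_add add: of_nat_add[symmetric])

lemma tile_pos_snoc: "i \<le> length ds \<Longrightarrow> tile_pos (ds@[b]) i = tile_pos ds i"
  by (simp add: tile_pos_def)

lemma tile_pos_Suc: "i < length ds \<Longrightarrow> tile_pos ds (Suc i) =
   (if ds!i then (fst (tile_pos ds i) + 1, snd (tile_pos ds i)) else (fst (tile_pos ds i), snd (tile_pos ds i) + 1))"
  by (simp add: tile_pos_def take_Suc_conv_app_nth)

lemma tile_pos_0: "tile_pos ds 0 = (0,0)" by (simp add: tile_pos_def)

definition ledge :: "bool list \<Rightarrow> bool \<Rightarrow> pt set" where
  "ledge ds b = (if b then east_edge ds (length ds) else north_edge ds (length ds))"

lemma V_bound: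
  assumes w: "w \<in> fst (snake_graph ds)" and pos: "tile_pos ds (length ds) = (x0,y0)"
  shows "fst w + snd w \<le> int (length ds) + 2"
    and "fst w + snd w = int (length ds) + 2 \<Longrightarrow> w = (x0+1,y0+1)"
proof -
  from w obtain i where i: "i \<le> length ds" "w \<in> tile_vertices ds i" unfolding snake_graph_def by auto
  obtain x y where xy: "tile_pos ds i = (x,y)" by (cases "tile_pos ds i") auto
  have s: "x + y = int i" using tile_pos_sum[OF i(1)] xy by simp
  have wv: "w \<in> {(x,y),(x+1,y),(x,y+1),(x+1,y+1)}" using i(2) xy unfolding tile_vertices_def by simp
  show "fst w + snd w \<le> int (length ds) + 2" using wv s i(1) by auto
  assume eq: "fst w + snd w = int (length ds) + 2"
  then have "i = length ds" using wv s i(1) by auto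
  then have "x = x0" "y = y0" using xy pos by auto
  then show "w = (x0+1,y0+1)" using wv s eq \<open>i = length ds\<close> by auto
qed

lemma sg_finite: "finite (snd (snake_graph ds))"
  unfolding snake_graph_def tile_edges_def by simp

lemma sg_wf: "\<forall>e\<in>snd (snake_graph ds). e \<subseteq> fst (snake_graph ds)"
proof
  fix e assume "e \<in> snd (snake_graph ds)"
  then obtain i where i: "i \<le> length ds" "e \<in> tile_edges ds i" unfolding snake_graph_def by auto
  obtain x y where xy: "tile_pos ds i = (x,y)" by (cases "tile_pos ds i") auto
  have "e \<subseteq> tile_vertices ds i" using i(2) xy
    unfolding tile_edges_def tile_vertices_def south_edge_def north_edge_def west_edge_def east_edge_def by auto
  then show "e \<subseteq> fst (snake_graph ds)" using i(1) unfolding snake_graph_def by auto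
qed

lemma sg_snoc: "snake_graph (ds@[b]) = (fst (snake_graph ds) \<union> tile_vertices (ds@[b]) (Suc (length ds)),
    snd (snake_graph ds) \<union> tile_edges (ds@[b]) (Suc (length ds)))"
proof -
  have v: "tile_vertices (ds@[b]) i = tile_vertices ds i" "tile_edges (ds@[b]) i = tile_edges ds i"
    if "i \<le> length ds" for i
    using tile_pos_snoc[OF that, of b] that
    unfolding tile_vertices_def tile_edges_def south_edge_def north_edge_def west_edge_def east_edge_def
    by auto
  have "(\<Union>i\<le>length ds. tile_vertices (ds@[b]) i) = (\<Union>i\<le>length ds. tile_vertices ds i)"
    "(\<Union>i\<le>length ds. tile_edges (ds@[b]) i) = (\<Union>i\<le>length ds. tile_edges ds i)"
    using v by auto
  then show ?thesis unfolding snake_graph_def by (simp add: atMost_Suc Un_commute)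
qed

lemma set_aux1: "c \<in> E \<Longrightarrow> E \<union> {a,b,c,d} = E \<union> {d,a,b}" by blast
lemma set_aux2: "c \<in> E \<Longrightarrow> E \<union> {c,d,a,b} = E \<union> {d,a,b}" by blast
lemma set_aux3: "p \<in> V \<Longrightarrow> q \<in> V \<Longrightarrow> V \<union> {p,u,q,v} = V \<union> {u,v}" by blast
lemma set_aux4: "p \<in> V \<Longrightarrow> q \<in> V \<Longrightarrow> V \<union> {p,q,u,v} = V \<union> {u,v}" by blast

lemma snake_snoc:
  obtains p q u v where
    "snake_graph (ds@[b]) = (fst (snake_graph ds) \<union> {u,v}, snd (snake_graph ds) \<union> {{u,v},{p,u},{q,v}})"
    "ledge ds b = {p,q}" "\<And>b'. ledge (ds@[b]) b' = (if b = b' then {u,v} else {q,v})"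
    "u \<notin> fst (snake_graph ds)" "v \<notin> fst (snake_graph ds)" "u \<noteq> v"
    "p \<in> fst (snake_graph ds)" "q \<in> fst (snake_graph ds)" "p \<noteq> q"
proof -
  define n where "n = length ds"
  obtain x0 y0 where pos: "tile_pos ds n = (x0,y0)" by (cases "tile_pos ds n") auto
  have pos': "tile_pos (ds@[b]) n = (x0,y0)" using tile_pos_snoc[of n ds b] pos n_def by simp
  have t: "tile_pos (ds@[b]) (Suc n) = (if b then (x0+1,y0) else (x0,y0+1))"
  proof -
    have nb: "(ds@[b])!n = b" using n_def by simp
    have "tile_pos (ds@[b]) (Suc n) = (if (ds@[b])!n then (fst (tile_pos (ds@[b]) n) + 1, snd (tile_pos (ds@[b]) n))
      else (fst (tile_pos (ds@[b]) n), snd (tile_pos (ds@[b]) n) + 1))"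
      by (rule tile_pos_Suc) (simp add: n_def)
    then show ?thesis unfolding nb pos' by simp
  qed
  have len: "length (ds@[b]) = Suc n" using n_def by simp
  have Vn: "tile_vertices ds n \<subseteq> fst (snake_graph ds)" unfolding snake_graph_def n_def by auto
  have En: "tile_edges ds n \<subseteq> snd (snake_graph ds)" unfolding snake_graph_def n_def by auto
  have notV: "w \<notin> fst (snake_graph ds)" if "fst w + snd w > int n + 2 \<or> (fst w + snd w = int n + 2 \<and> w \<noteq> (x0+1,y0+1))" for w
    using V_bound[of w ds x0 y0] pos that n_def by force
  have sum0: "x0 + y0 = int n" using tile_pos_sum[of n ds] pos n_def by simp
  have sgs: "snake_graph (ds@[b]) = (fst (snake_graph ds) \<union> tile_vertices (ds@[b]) (Suc n),
    snd (snake_graph ds) \<union> tile_edges (ds@[b]) (Suc n))" using sg_snoc[of ds b] n_def by simp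
  show ?thesis
  proof (cases b)
    case True
    let ?p = "(x0+1,y0)" and ?q = "(x0+1,y0+1)" and ?u = "(2+x0,y0)" and ?v = "(2+x0,y0+1)"
    have t': "tile_pos (ds@[b]) (Suc n) = (x0+1,y0)" using t True by simp
    show ?thesis
    proof (rule that[of ?u ?v ?p ?q])
      have tv: "tile_vertices (ds@[b]) (Suc n) = {?p,?u,?q,?v}" using t'
        unfolding tile_vertices_def by simp
      have te: "tile_edges (ds@[b]) (Suc n) = {{?p,?u},{?q,?v},{?p,?q},{?u,?v}}" using t'
        unfolding tile_edges_def south_edge_def north_edge_def west_edge_def east_edge_def
        by simp
      have pqE: "{?p,?q} \<in> snd (snake_graph ds)" using En pos
        unfolding tile_edges_def east_edge_def by simp
      have pqV: "?p \<in> fst (snake_graph ds)" "?q \<in> fst (snake_graph ds)"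
        using Vn pos unfolding tile_vertices_def by simp_all
      show "snake_graph (ds@[b]) = (fst (snake_graph ds) \<union> {?u,?v}, snd (snake_graph ds) \<union> {{?u,?v},{?p,?u},{?q,?v}})"
        unfolding sgs tv te set_aux1[OF pqE] set_aux3[OF pqV] ..
      show "ledge ds b = {?p,?q}" using True pos n_def unfolding ledge_def east_edge_def by simp
      show "ledge (ds@[b]) b' = (if b = b' then {?u,?v} else {?q,?v})" for b'
        using True t' len unfolding ledge_def east_edge_def north_edge_def by simp
      show "?u \<notin> fst (snake_graph ds)" using notV[of ?u] sum0 by simp
      show "?v \<notin> fst (snake_graph ds)" using notV[of ?v] sum0 by simp
      show "?p \<in> fst (snake_graph ds)" "?q \<in> fst (snake_graph ds)" by (fact pqV)+
    qed simp_all
  next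
    case False
    let ?p = "(x0,y0+1)" and ?q = "(x0+1,y0+1)" and ?u = "(x0,2+y0)" and ?v = "(x0+1,2+y0)"
    have t': "tile_pos (ds@[b]) (Suc n) = (x0,y0+1)" using t False by simp
    show ?thesis
    proof (rule that[of ?u ?v ?p ?q])
      have tv: "tile_vertices (ds@[b]) (Suc n) = {?p,?q,?u,?v}" using t'
        unfolding tile_vertices_def by simp
      have te: "tile_edges (ds@[b]) (Suc n) = {{?p,?q},{?u,?v},{?p,?u},{?q,?v}}" using t'
        unfolding tile_edges_def south_edge_def north_edge_def west_edge_def east_edge_def
        by simp
      have pqE: "{?p,?q} \<in> snd (snake_graph ds)" using En pos
        unfolding tile_edges_def north_edge_def by simp
      have pqV: "?p \<in> fst (snake_graph ds)" "?q \<in> fst (snake_graph ds)"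
        using Vn pos unfolding tile_vertices_def by simp_all
      show "snake_graph (ds@[b]) = (fst (snake_graph ds) \<union> {?u,?v}, snd (snake_graph ds) \<union> {{?u,?v},{?p,?u},{?q,?v}})"
        unfolding sgs tv te set_aux2[OF pqE] set_aux4[OF pqV] ..
      show "ledge ds b = {?p,?q}" using False pos n_def unfolding ledge_def north_edge_def by simp
      show "ledge (ds@[b]) b' = (if b = b' then {?u,?v} else {?q,?v})" for b'
        using False t' len unfolding ledge_def east_edge_def north_edge_def by simp
      show "?u \<notin> fst (snake_graph ds)" using notV[of ?u] sum0 by simp
      show "?v \<notin> fst (snake_graph ds)" using notV[of ?v] sum0 by simp
      show "?p \<in> fst (snake_graph ds)" "?q \<in> fst (snake_graph ds)" by (fact pqV)+
    qed simp_all
  qed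
qed



lemma pm_empty: "num_pm ({}, {}) = 1"
proof -
  have "perfect_matchings ({}, {}) = {{}}" unfolding perfect_matchings_def by auto
  then show ?thesis unfolding num_pm_def by simp
qed

lemma pm_edge1: "p \<noteq> q \<Longrightarrow> num_pm ({p,q}, {{p,q}}) = 1 \<and> num_pm (gdel ({p,q}, {{p,q}}) {p,q}) = 1"
proof -
  assume pq: "p \<noteq> q"
  have g: "gdel ({p,q}, {{p,q}}) {p,q} = ({}, {})" unfolding gdel_def by auto
  have "num_pm ({p,q}, {{p,q}}) = num_pm (gdel ({p,q}, {{p,q}}) {p,q})"
    by (rule pm_split1[of p]) auto
  then show ?thesis using g pm_empty by simp
qed

lemma snake_base: "num_pm (snake_graph []) = 2 \<and> num_pm (gdel (snake_graph []) (ledge [] b)) = 1"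
proof -
  let ?p = "(0::int,0::int)" and ?q = "(1::int,0::int)" and ?u = "(0::int,1::int)" and ?v = "(1::int,1::int)"
  have sg0: "snake_graph [] = ({?p,?q,?u,?v}, {{?p,?q},{?u,?v},{?p,?u},{?q,?v}})"
    unfolding snake_graph_def tile_vertices_def tile_edges_def south_edge_def north_edge_def
      west_edge_def east_edge_def by (simp add: tile_pos_0)
  have aux: "\<And>a b c d::pt. {a,b,c,d} = {a,b} \<union> {c,d}" "\<And>a b c d::pt set. {a,b,c,d} = {a} \<union> {b,c,d}" by auto
  have sg: "snake_graph [] = ({?p,?q} \<union> {?u,?v}, {{?p,?q}} \<union> {{?u,?v},{?p,?u},{?q,?v}})"
    unfolding sg0 aux ..
  have le: "ledge [] b = (if b then {?q,?v} else {?u,?v})"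
    unfolding ledge_def east_edge_def north_edge_def by (simp add: tile_pos_0)
  note e = pm_ext[of "{{?p,?q}}" "{?p,?q}" ?u ?v ?p ?q]
  have h: "finite {{?p,?q}}" "\<forall>e\<in>{{?p,?q}}. e \<subseteq> {?p,?q}" "?u \<notin> {?p,?q}" "?v \<notin> {?p,?q}" "?u \<noteq> ?v"
    "?p \<in> {?p,?q}" "?q \<in> {?p,?q}" "?p \<noteq> ?q" by auto
  have pe: "num_pm ({?p,?q}, {{?p,?q}}) = 1" "num_pm (gdel ({?p,?q}, {{?p,?q}}) {?p,?q}) = 1"
    using pm_edge1[of ?p ?q] by simp_all
  have A: "num_pm (snake_graph []) = 2" unfolding sg e(1)[OF h] pe by simp
  have B: "num_pm (gdel (snake_graph []) (ledge [] b)) = 1"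
  proof (cases b)
    case True then show ?thesis unfolding sg le using e(3)[OF h] pe by simp
  next
    case False then show ?thesis unfolding sg le using e(2)[OF h] pe by simp
  qed
  show ?thesis using A B by blast
qed

lemma snake_count: "num_pm (snake_graph ds) = fst (pm_run False (ds@[b]) (1,1)) \<and>
   num_pm (gdel (snake_graph ds) (ledge ds b)) = snd (pm_run False (ds@[b]) (1,1))"
proof (induction ds arbitrary: b rule: rev_induct)
  case Nil
  have r: "pm_run False ([] @ [b]) (1,1) = (2,1)" by simp
  show ?case unfolding r fst_conv snd_conv by (rule snake_base)
next
  case (snoc x ds)
  obtain u v p q where o:
    "snake_graph (ds@[x]) = (fst (snake_graph ds) \<union> {u,v}, snd (snake_graph ds) \<union> {{u,v},{p,u},{q,v}})"
    "ledge ds x = {p,q}" "\<And>b'. ledge (ds@[x]) b' = (if x = b' then {u,v} else {q,v})"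
    "u \<notin> fst (snake_graph ds)" "v \<notin> fst (snake_graph ds)" "u \<noteq> v"
    "p \<in> fst (snake_graph ds)" "q \<in> fst (snake_graph ds)" "p \<noteq> q"
    by (rule snake_snoc[of ds x]) (rule that, assumption+)
  note e = pm_ext[OF sg_finite sg_wf o(4-9)]
  have c: "(fst (snake_graph ds), snd (snake_graph ds)) = snake_graph ds" by simp
  define r where "r = pm_run False (ds@[x]) (1,1)"
  have IH: "num_pm (snake_graph ds) = fst r" "num_pm (gdel (snake_graph ds) {p,q}) = snd r"
    using snoc.IH[of x] o(2) r_def by auto
  have run: "pm_run False ((ds@[x])@[b]) (1,1) = (fst r + snd r, if x = b then fst r else snd r)"
    unfolding r_def pm_run_snoc[of False "ds@[x]" b] Let_def by simp
  show ?case unfolding run o(1) o(3) using e IH unfolding c by auto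
qed

lemma es_len: "length (edge_seq ds ed) = length ds + 2" by (simp add: edge_seq_def)
lemma es_0: "edge_seq ds ed ! 0 = south_edge ds 0" by (simp add: edge_seq_def)
lemma es_mid: "0 < j \<Longrightarrow> j \<le> length ds \<Longrightarrow> edge_seq ds ed ! j = shared_edge ds (j-1)"
  by (cases j) (auto simp: edge_seq_def nth_append)
lemma es_last: "edge_seq ds ed ! Suc (length ds) = ed" by (simp add: edge_seq_def nth_append)

lemma shared_in: "j < length ds \<Longrightarrow> shared_edge ds j = (if ds!j then west_edge ds (Suc j) else south_edge ds (Suc j))"
  using tile_pos_Suc[of j ds]
  by (cases "tile_pos ds j") (auto simp: shared_edge_def east_edge_def west_edge_def north_edge_def south_edge_def)

lemma sign_step:
  assumes sf: "sign_function ds f" and j: "j \<le> length ds"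
  shows "(f (edge_seq ds (ledge ds b) ! j) \<noteq> f (edge_seq ds (ledge ds b) ! Suc j)) =
     ((False # ds @ [b]) ! j = (False # ds @ [b]) ! Suc j)"
proof -
  let ?D = "False # ds @ [b]" and ?es = "edge_seq ds (ledge ds b)"
  have ein: "?es ! j = (if ?D!j then west_edge ds j else south_edge ds j)"
  proof (cases j)
    case 0 then show ?thesis by (simp add: es_0)
  next
    case (Suc k)
    then have "k < length ds" using j by simp
    then show ?thesis using Suc es_mid[of j ds] j shared_in[of k ds] by (simp add: nth_append)
  qed
  have eout: "?es ! Suc j = (if ?D!Suc j then east_edge ds j else north_edge ds j)"
  proof (cases "j < length ds")
    case True then show ?thesis using es_mid[of "Suc j" ds] by (simp add: nth_append shared_edge_def)
  next
    case False then have "j = length ds" using j by simp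
    then show ?thesis by (simp add: es_last ledge_def)
  qed
  have s: "f (north_edge ds j) = f (west_edge ds j)" "f (south_edge ds j) = f (east_edge ds j)"
     "f (north_edge ds j) \<noteq> f (south_edge ds j)" using sf j unfolding sign_function_def by auto
  show ?thesis unfolding ein eout using s by (cases "?D!j"; cases "?D!Suc j") auto
qed

lemma numG: "\<forall>a\<in>set as. 0 < a \<Longrightarrow> is_G as H \<Longrightarrow> num_pm H = ka as"
proof -
  assume pos: "\<forall>a\<in>set as. 0 < a" and G: "is_G as H"
  show ?thesis
  proof (cases "sum_list as \<ge> 2")
    case True
    then obtain ds f s ed where H: "H = snake_graph ds" and sf: "sign_function ds f"
      and ed: "ed \<in> {north_edge ds (length ds), east_edge ds (length ds)}"
      and sg: "map f (edge_seq ds ed) = alt_signs s as"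
      using G unfolding is_G_def by auto
    obtain b where b: "ed = ledge ds b" using ed unfolding ledge_def by (metis insert_iff singletonD)
    define sgn where "sgn = map f (edge_seq ds ed)"
    have lsg: "length sgn = length ds + 2" unfolding sgn_def by (simp add: es_len)
    have sgn_nth: "sgn ! j = f (edge_seq ds ed ! j)" if "j < length ds + 2" for j
      unfolding sgn_def using that by (simp add: es_len)
    have "sgn \<noteq> []" using lsg by auto
    then have sgc: "hd sgn # tl sgn = sgn" by simp
    have "pm_run False (ds@[b]) (1,1) = srun (hd sgn) (tl sgn) (1,1)"
    proof (rule run_eq)
      show "length (tl sgn) = length (ds @ [b])" using lsg by simp
      show "\<forall>j<length (ds @ [b]). ((False # ds @ [b]) ! j = (False # ds @ [b]) ! Suc j) =
          ((hd sgn # tl sgn) ! j \<noteq> (hd sgn # tl sgn) ! Suc j)"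
        unfolding sgc using sign_step[OF sf, of _ b] sgn_nth b by simp
    qed
    moreover have "num_pm H = fst (pm_run False (ds@[b]) (1,1))" using snake_count H by blast
    moreover obtain a t where as: "as = a#t" using True by (cases as) auto
    moreover obtain k where a: "a = Suc k" using pos as by (cases a) auto
    ultimately have "num_pm H = fst (srun s (replicate k s @ alt_signs (\<not>s) t) (1,1))"
      using sg unfolding sgn_def by (simp add: alt_signs_Cons)
    also have "\<dots> = fst (srun (\<not>s) (alt_signs s as) (1,0))"
      by (simp add: as a alt_signs_Cons)
    also have "\<dots> = ka as" using srun_alt[OF pos] by (simp add: ka_def)
    finally show ?thesis .
  next
    case False
    then have H: "H = single_edge" using G unfolding is_G_def by simp
    have pm1: "num_pm single_edge = 1" unfolding single_edge_def
      using pm_edge1[of "(0,0)" "(1,0)"] by simp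
    have "as = [] \<or> as = [1]"
    proof (cases as)
      case (Cons a t)
      have a0: "0 < a" using pos Cons by simp
      have "a + sum_list t < 2" using False Cons by simp
      then have "a = 1" "sum_list t = 0" using a0 by linarith+
      then have "\<forall>x\<in>set t. x = 0" by (simp add: sum_list_eq_0_iff)
      then have "t = []" using pos Cons by (cases t) auto
      then show ?thesis using Cons \<open>a = 1\<close> by simp
    qed simp
    then show ?thesis using H pm1 by (auto simp: ka_def)
  qed
qed

theorem theorem3p9:
  fixes as :: "nat list" and G Gpal G' :: graph
  assumes "as \<noteq> []"
    and "\<forall>a\<in>set as. a > 0"
    and "is_G as G"
    and "is_G (rev as @ as) Gpal"
    and "is_G (tl as) G'"
  shows "num_pm Gpal = num_pm G ^ 2 + num_pm G' ^ 2"
proof -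
  have p2: "\<forall>a\<in>set (rev as @ as). a > 0" "\<forall>a\<in>set (tl as). a > 0"
    using assms(1,2) by (cases as; auto)+
  show ?thesis using numG[OF assms(2,3)] numG[OF p2(1) assms(4)] numG[OF p2(2) assms(5)] k_pal[OF assms(1)]
    by simp
qed

end
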